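(* Let $k$ be a field and let $d,m$ be integers with $d$ even and $2 \le d < m-1$. Set $a=(d+2)/2$. Then \[ k[\Delta(d,m)] \cong k[x_1,\dots,x_m]/(I_{a,1,m-1},\, I_{a,2,m}), \] i.e. the Stanley–Reisner ideal of $\Delta(d,m)$ (with vertices labeled as below) is the ideal of $k[x_1,\dots,x_m]$ generated by $I_{a,1,m-1}$ and $I_{a,2,m}$.
   Context: For integers $2\le d<m$, fix real numbers $t_1<t_2<\dots<t_m$ and let $C_d(m)\subset\mathbb{R}^d$ be the cyclic polytope, the convex hull of the points $f(t_1),\dots,f(t_m)$ where $f(t)=(t,t^2,\dots,t^d)$. It is a simplicial $d$-polytope whose combinatorial type does not depend on the choice of the $t_i$. $\Delta(d,m)$ denotes its boundary simplicial complex on the vertex set $\{1,\dots,m\}$ (vertex $i$ corresponding to $f(t_i)$): its faces are the empty set and the vertex sets of proper faces of $C_d(m)$. For a simplicial complex $\Delta$ on $\{1,\dots,m\}$, its Stanley–Reisner ring is $k[\Delta]=k[x_1,\dots,x_m]/I_\Delta$, where $I_\Delta$ is generated by the squarefree monomials $\prod_{t\in W}x_t$ with $W\notin\Delta$. For positive integers $a,p,q$ with $p<q$ and $2a\le q-p+2$, $I_{a,p,q}$ denotes the ideal of $k[x_p,\dots,x_q]$ (and also its extension to any larger polynomial ring) generated by all monomials $x_{t_1}x_{t_2}\cdots x_{t_a}$ with $p\le t_1$, $t_a\le q$ and $t_j+2\le t_{j+1}$ for $1\le j\le a-1$. *)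

theory Defs
  imports "HOL-Analysis.Analysis" "HOL-Library.Poly_Mapping"
begin

text \<open>Moment curve in R^d. Coordinates of R^d are the elements of a finite type 'n,
  labelled 1..d by a bijection idx; coordinate number j of f(t) is t^j.\<close>
definition moment_curve :: "('n::finite \<Rightarrow> nat) \<Rightarrow> real \<Rightarrow> real ^ 'n" where
  "moment_curve idx s = (\<chi> i. s ^ idx i)"

definition cyclic_polytope :: "('n::finite \<Rightarrow> nat) \<Rightarrow> nat \<Rightarrow> (nat \<Rightarrow> real) \<Rightarrow> (real ^ 'n) set" where
  "cyclic_polytope idx m t = convex hull ((\<lambda>i. moment_curve idx (t i)) ` {1..m})"

definition cyclic_boundary_complex :: "('n::finite \<Rightarrow> nat) \<Rightarrow> nat \<Rightarrow> (nat \<Rightarrow> real) \<Rightarrow> nat set set" where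
  "cyclic_boundary_complex idx m t =
     {W. \<exists>F. F face_of cyclic_polytope idx m t \<and> F \<noteq> cyclic_polytope idx m t \<and>
            W = {i \<in> {1..m}. moment_curve idx (t i) \<in> F}}"

text \<open>Multivariate polynomials over k in variables x_i (i :: nat), as finitely supported
  maps from monomials (exponent vectors) to coefficients.\<close>
type_synonym 'k mpoly = "(nat \<Rightarrow>\<^sub>0 nat) \<Rightarrow>\<^sub>0 'k"

definition var :: "nat \<Rightarrow> 'k::comm_ring_1 mpoly" where
  "var i = Poly_Mapping.single (Poly_Mapping.single i 1) 1"

text \<open>The polynomial ring k[x_1,...,x_m] as the subset of polynomials involving only x_1..x_m.\<close>
definition poly_ring :: "nat \<Rightarrow> 'k::comm_ring_1 mpoly set" where
  "poly_ring m = {p :: 'k mpoly. \<forall>\<mu> \<in> Poly_Mapping.keys p. Poly_Mapping.keys \<mu> \<subseteq> {1..m}}"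

definition ideal_gen_in :: "'k::comm_ring_1 mpoly set \<Rightarrow> 'k mpoly set \<Rightarrow> 'k mpoly set" where
  "ideal_gen_in R S = {\<Sum>g\<in>G. c g * g | G c. finite G \<and> G \<subseteq> S \<and> (\<forall>g\<in>G. c g \<in> R)}"

definition sqfree_monomial :: "nat set \<Rightarrow> 'k::comm_ring_1 mpoly" where
  "sqfree_monomial W = (\<Prod>i\<in>W. var i)"

definition stanley_reisner_ideal :: "nat \<Rightarrow> nat set set \<Rightarrow> 'k::comm_ring_1 mpoly set" where
  "stanley_reisner_ideal m \<Delta> =
     ideal_gen_in (poly_ring m) {sqfree_monomial W | W. W \<subseteq> {1..m} \<and> W \<notin> \<Delta>}"

definition Igens :: "nat \<Rightarrow> nat \<Rightarrow> nat \<Rightarrow> 'k::comm_ring_1 mpoly set" where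
  "Igens a p q = {\<Prod>j\<in>{1..a}. var (s j) | s :: nat \<Rightarrow> nat.
      p \<le> s 1 \<and> s a \<le> q \<and> (\<forall>j\<in>{1..a-1}. s j + 2 \<le> s (j+1))}"

end

theory Submission
  imports Defs
begin



lemma chain_le:
  fixes y :: "nat \<Rightarrow> real"
  assumes "\<forall>k<K. y k < y (Suc k)" "i \<le> j" "j \<le> K"
  shows "y i \<le> y j"
  using assms(2,3)
proof (induction j)
  case 0 then show ?case by simp
next
  case (Suc j)
  show ?case
  proof (cases "i = Suc j")
    case False
    then have "i \<le> j" using Suc by simp
    then have "y i \<le> y j" using Suc by simp
    also have "\<dots> < y (Suc j)" using assms(1) Suc by simp
    finally show ?thesis by simp
  qed simp
qed

lemma chain_less:
  fixes y :: "nat \<Rightarrow> real"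
  assumes "\<forall>k<K. y k < y (Suc k)" "i < j" "j \<le> K"
  shows "y i < y j"
proof -
  obtain j' where j: "j = Suc j'" using assms(2) by (cases j) auto
  have "y i \<le> y j'" using chain_le[OF assms(1), of i j'] assms j by simp
  also have "\<dots> < y j" using assms j by simp
  finally show ?thesis .
qed

lemma pos_mult_nonneg: "(c::real) > 0 \<Longrightarrow> 0 \<le> c * x \<Longrightarrow> 0 \<le> x"
  by (simp add: zero_le_mult_iff)

lemma alt_roots:
  fixes g :: "real poly"
  shows "g \<noteq> 0 \<Longrightarrow> (\<forall>k<K. y k < y (Suc k)) \<Longrightarrow> (\<forall>k\<le>K. 0 \<le> (-1)^k * poly g (y k)) \<Longrightarrow> K \<le> degree g"
proof (induction K arbitrary: g y)
  case 0 then show ?case by simp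
next
  case (Suc K)
  have g0: "poly g (y 0) \<ge> 0" using Suc.prems(3)[rule_format, of 0] by simp
  have g1: "poly g (y 1) \<le> 0" using Suc.prems(3)[rule_format, of 1] by simp
  have y01: "y 0 < y 1" using Suc.prems(2) by auto
  obtain r where r: "y 0 \<le> r" "r \<le> y 1" "poly g r = 0"
  proof (cases "poly g (y 0) = 0")
    case True then show ?thesis using that[of "y 0"] y01 by simp
  next
    case False
    show ?thesis
    proof (cases "poly g (y 1) = 0")
      case True then show ?thesis using that[of "y 1"] y01 by simp
    next
      case False2: False
      then obtain x where "y 0 < x" "x < y 1" "poly g x = 0"
        using poly_IVT_neg[OF y01, of g] g0 g1 False by force
      then show ?thesis using that[of x] by simp
    qed
  qed
  obtain h where h: "g = [:-r,1:] * h" using r(3) poly_eq_0_iff_dvd by (metis dvdE)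
  have hne: "h \<noteq> 0" using h Suc.prems(1) by auto
  have degg: "degree g = Suc (degree h)" proof -
    have "degree ([:-r,1:] * h) = degree [:-r,1:] + degree h"
      by (rule degree_mult_eq) (use hne in auto)
    moreover have "degree [:-r,1::real:] = 1" by simp
    ultimately show ?thesis using h by simp
  qed
  have pg: "\<And>x. poly g x = (x - r) * poly h x" unfolding h by (simp add: algebra_simps)
  have later: "\<And>k. k \<le> K \<Longrightarrow> y 1 \<le> y (Suc k)"
    using chain_le[OF Suc.prems(2)] by simp
  have hk: "\<And>k. k \<le> K \<Longrightarrow> r < y (Suc k) \<Longrightarrow> 0 \<le> (-1)^k * poly (-h) (y (Suc k))"
  proof -
    fix k assume k: "k \<le> K" "r < y (Suc k)"
    have "0 \<le> (-1)^(Suc k) * poly g (y (Suc k))" using Suc.prems(3)[rule_format, of "Suc k"] k by simp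
    then have "0 \<le> (y (Suc k) - r) * ((-1)^k * poly (-h) (y (Suc k)))"
      by (simp add: pg algebra_simps)
    then show "0 \<le> (-1)^k * poly (-h) (y (Suc k))"
      using k(2) by (simp add: mult_le_0_iff)
  qed
  show ?case
  proof (cases "r < y 1")
    case True
    have "K \<le> degree (-h)"
    proof (rule Suc.IH)
      show "- h \<noteq> 0" using hne by simp
      show "\<forall>k<K. y (Suc k) < y (Suc (Suc k))" using Suc.prems(2) by simp
      show "\<forall>k\<le>K. 0 \<le> (-1)^k * poly (-h) (y (Suc k))"
        using hk later True by (meson less_le_trans)
    qed
    then show ?thesis using degg by simp
  next
    case False
    then have ry: "r = y 1" using r by simp
    define z where "z k = (if k = 0 then y 0 else y (Suc k))" for k
    have "K \<le> degree (-h)"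
    proof (rule Suc.IH)
      show "- h \<noteq> 0" using hne by simp
      show "\<forall>k<K. z k < z (Suc k)"
      proof (intro allI impI)
        fix k assume k: "k < K"
        show "z k < z (Suc k)"
        proof (cases k)
          case 0
          have "y 0 < y 2" using chain_less[OF Suc.prems(2), of 0 2] k 0 by simp
          then show ?thesis using 0 by (simp add: z_def numeral_2_eq_2)
        next
          case (Suc k') then show ?thesis using Suc.prems(2) k by (simp add: z_def)
        qed
      qed
      show "\<forall>k\<le>K. 0 \<le> (-1)^k * poly (-h) (z k)"
      proof (intro allI impI)
        fix k assume k: "k \<le> K"
        show "0 \<le> (-1)^k * poly (-h) (z k)"
        proof (cases k)
          case 0
          have "0 \<le> (y 0 - r) * poly h (y 0)" using g0 pg by simp
          moreover have "y 0 - r < 0" using ry y01 by simp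
          ultimately have "poly h (y 0) \<le> 0" by (simp add: zero_le_mult_iff)
          then show ?thesis using 0 by (simp add: z_def)
        next
          case (Suc k')
          have "r < y (Suc k)"
          proof -
            have "y 1 < y (Suc k)" using chain_less[OF Suc.prems(2), of 1 "Suc k"] k Suc by simp
            then show ?thesis using ry by simp
          qed
          then show ?thesis using hk[OF k] Suc by (simp add: z_def)
        qed
      qed
    qed
    then show ?thesis using degg by simp
  qed
qed




definition sparse :: "nat set \<Rightarrow> bool" where
  "sparse A \<longleftrightarrow> (\<forall>x\<in>A. \<forall>y\<in>A. x < y \<longrightarrow> x + 2 \<le> y)"

definition good :: "nat \<Rightarrow> (nat \<Rightarrow> real) \<Rightarrow> nat set \<Rightarrow> real poly \<Rightarrow> nat set \<Rightarrow> nat set \<Rightarrow> bool" where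
  "good m t W h A B \<longleftrightarrow> (\<forall>j\<in>{1..m}. 0 \<le> poly h (t j) \<and> (poly h (t j) = 0 \<longleftrightarrow> j \<in> W))
     \<and> degree h \<le> card A + card B \<and> finite A \<and> finite B \<and> A \<subseteq> W \<and> B \<subseteq> W
     \<and> sparse A \<and> sparse B \<and> m \<notin> A \<and> 1 \<notin> B"

lemma good_one: "good m t {} 1 {} {}"
  by (simp add: good_def sparse_def)

lemma sparse_union:
  "sparse A \<Longrightarrow> sparse B \<Longrightarrow> (\<forall>x\<in>A. \<forall>y\<in>B. x + 2 \<le> y) \<Longrightarrow> sparse (A \<union> B)"
  unfolding sparse_def by (metis Un_iff add_leD1 le_less_trans less_irrefl not_less)

lemma good_mult:
  assumes "good m t W1 h1 A1 B1" "good m t W2 h2 A2 B2" "W1 \<inter> W2 = {}"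
    "\<forall>x\<in>A1. \<forall>y\<in>A2. x + 2 \<le> y" "\<forall>x\<in>B1. \<forall>y\<in>B2. x + 2 \<le> y"
  shows "good m t (W1 \<union> W2) (h1 * h2) (A1 \<union> A2) (B1 \<union> B2)"
proof -
  have dA: "A1 \<inter> A2 = {}" using assms(4) by force
  have dB: "B1 \<inter> B2 = {}" using assms(5) by force
  have "degree (h1 * h2) \<le> degree h1 + degree h2" by (rule degree_mult_le)
  also have "\<dots> \<le> card A1 + card B1 + (card A2 + card B2)"
    using assms(1,2) unfolding good_def by (meson add_le_mono)
  also have "\<dots> = card (A1 \<union> A2) + card (B1 \<union> B2)"
    using assms(1,2) dA dB unfolding good_def by (simp add: card_Un_disjoint)
  finally have deg: "degree (h1 * h2) \<le> card (A1 \<union> A2) + card (B1 \<union> B2)" .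
  show ?thesis
    using assms(1,2) deg sparse_union[of A1 A2] sparse_union[of B1 B2] assms(4,5)
    unfolding good_def by (auto simp: zero_le_mult_iff)
qed

context
  fixes m :: nat and t :: "nat \<Rightarrow> real"
  assumes sm: "strict_mono_on {1..m} t"
begin

lemma tless: "i \<in> {1..m} \<Longrightarrow> j \<in> {1..m} \<Longrightarrow> t i < t j \<longleftrightarrow> i < j"
  using strict_mono_on_less[OF sm] by blast

lemma teq: "i \<in> {1..m} \<Longrightarrow> j \<in> {1..m} \<Longrightarrow> t i = t j \<longleftrightarrow> i = j"
  using strict_mono_on_eqD[OF sm] by blast

lemma good_sq:
  assumes "2 \<le> p" "p < m"
  shows "good m t {p} ([:-t p, 1:]^2) {p} {p}"
proof -
  have "\<forall>j\<in>{1..m}. (t j - t p)^2 = 0 \<longleftrightarrow> j = p" using teq assms by auto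
  moreover have "degree ([:-t p, 1:]^2) \<le> 2"
    using degree_power_le[of "[:-t p, 1:]" 2] by simp
  ultimately show ?thesis using assms unfolding good_def sparse_def
    by (simp add: algebra_simps)
qed

lemma pairval:
  assumes "1 \<le> i" "Suc i \<le> m" "j \<in> {1..m}"
  shows "0 \<le> (t j - t i) * (t j - t (Suc i)) \<and>
         ((t j - t i) * (t j - t (Suc i)) = 0 \<longleftrightarrow> j = i \<or> j = Suc i)"
proof -
  have i: "i \<in> {1..m}" "Suc i \<in> {1..m}" using assms by auto
  show ?thesis
  proof (cases "j \<le> i")
    case True
    then have "t j \<le> t i" "t j < t (Suc i)" using tless[OF assms(3) i(1)] tless[OF assms(3) i(2)]
      by auto
    then show ?thesis using teq[OF assms(3) i(1)] teq[OF assms(3) i(2)] True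
      by (auto simp: mult_nonpos_nonpos)
  next
    case False
    then have "t j > t i" using tless[OF i(1) assms(3)] by auto
    moreover have "t j \<ge> t (Suc i)" using strict_mono_on_leD[OF sm i(2) assms(3)] False by auto
    ultimately show ?thesis using teq[OF assms(3) i(1)] teq[OF assms(3) i(2)] False by auto
  qed
qed

lemma good_pair:
  assumes "1 \<le> i" "Suc i \<le> m" "A \<subseteq> {i, Suc i}" "B \<subseteq> {i, Suc i}" "card A + card B \<ge> 2"
    "sparse A" "sparse B" "m \<notin> A" "1 \<notin> B"
  shows "good m t {i, Suc i} ([:-t i, 1:] * [:-t (Suc i), 1:]) A B"
proof -
  have deg: "degree ([:-t i, 1:] * [:-t (Suc i), 1:]) \<le> 2"
    using degree_mult_le[of "[:-t i, 1:]" "[:-t (Suc i), 1:]"] by simp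
  have "finite A" "finite B" using assms(3,4) finite_subset by auto
  then show ?thesis using pairval[OF assms(1,2)] assms deg unfolding good_def
    by (simp add: algebra_simps)
qed

lemma good_lin1:
  assumes "1 < m"
  shows "good m t {1} [:-t 1, 1:] {1} {}"
proof -
  have "\<forall>j\<in>{1..m}. 0 \<le> t j - t 1 \<and> (t j - t 1 = 0 \<longleftrightarrow> j = 1)"
  proof
    fix j assume j: "j \<in> {1..m}"
    have "t 1 \<le> t j" using strict_mono_on_leD[OF sm _ j] j assms by auto
    then show "0 \<le> t j - t 1 \<and> (t j - t 1 = 0 \<longleftrightarrow> j = 1)" using teq[OF j, of 1] assms by auto
  qed
  then show ?thesis using assms unfolding good_def sparse_def by simp
qed

lemma good_linM:
  assumes "1 < m"
  shows "good m t {m} [:t m, -1:] {} {m}"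
proof -
  have "\<forall>j\<in>{1..m}. 0 \<le> t m - t j \<and> (t m - t j = 0 \<longleftrightarrow> j = m)"
  proof
    fix j assume j: "j \<in> {1..m}"
    have "t j \<le> t m" using strict_mono_on_leD[OF sm j] j assms by auto
    then show "0 \<le> t m - t j \<and> (t m - t j = 0 \<longleftrightarrow> j = m)" using teq[OF j, of m] assms by auto
  qed
  then show ?thesis using assms unfolding good_def sparse_def by simp
qed

end



context
  fixes m :: nat and t :: "nat \<Rightarrow> real"
  assumes sm: "strict_mono_on {1..m} t"
begin

lemma good_Q: "2 \<le> p \<Longrightarrow> W \<subseteq> {p..m} \<Longrightarrow> \<exists>h A B. good m t W h A B"
proof (induction "Suc m - p" arbitrary: p W rule: less_induct)
  case less
  show ?case
  proof (cases "W = {}")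
    case True
    have "good m t W 1 {} {}" using good_one True by simp
    then show ?thesis by blast
  next
    case Wne: False
    then obtain x where x: "x \<in> W" by blast
    then have pm: "p \<le> m" using less.prems(2) by force
    show ?thesis
    proof (cases "p \<in> W")
      case False
      then have "W \<subseteq> {Suc p..m}" using less.prems(2)
        by (metis Suc_leI atLeastAtMost_iff le_neq_implies_less subset_iff)
      moreover have "Suc m - Suc p < Suc m - p" using pm by simp
      ultimately show ?thesis using less.hyps[of "Suc p" W] less.prems(1) by simp
    next
      case pW: True
      show ?thesis
      proof (cases "p = m")
        case True
        then have "W = {m}" using less.prems(2) pW by auto
        moreover have "good m t {m} [:t m, -1:] {} {m}" using good_linM[OF sm] less.prems(1) True by simp
        ultimately show ?thesis by blast
      next
        case False
        then have plm: "p < m" using pm by simp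
        have lt: "Suc m - (p+2) < Suc m - p" using pm by simp
        show ?thesis
        proof (cases "Suc p \<in> W")
          case True
          define W' where "W' = W - {p, Suc p}"
          have W': "W' \<subseteq> {p+2..m}" using less.prems(2) unfolding W'_def by auto
          have "\<exists>h A B. good m t W' h A B"
            using less.hyps[OF lt _ W'] less.prems(1) by simp
          then obtain h A B where g: "good m t W' h A B" by blast
          have gp: "good m t {p, Suc p} ([:-t p, 1:] * [:-t (Suc p), 1:]) {p} {p}"
            by (rule good_pair[OF sm]) (use plm less.prems(1) in \<open>auto simp: sparse_def\<close>)
          have "A \<subseteq> W'" "B \<subseteq> W'" using g unfolding good_def by auto
          then have c1: "\<forall>x\<in>{p}. \<forall>y\<in>A. x + 2 \<le> y" "\<forall>x\<in>{p}. \<forall>y\<in>B. x + 2 \<le> y"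
            "{p, Suc p} \<inter> W' = {}"
            using W' unfolding W'_def by auto
          have "good m t ({p, Suc p} \<union> W') (([:-t p, 1:] * [:-t (Suc p), 1:]) * h) ({p} \<union> A) ({p} \<union> B)"
            by (rule good_mult[OF gp g c1(3) c1(1) c1(2)])
          moreover have "{p, Suc p} \<union> W' = W" using True pW unfolding W'_def by auto
          ultimately show ?thesis by metis
        next
          case False
          define W' where "W' = W - {p}"
          have W': "W' \<subseteq> {p+2..m}" unfolding W'_def
          proof (rule subsetI)
            fix x assume "x \<in> W - {p}"
            then show "x \<in> {p+2..m}" using less.prems(2) False by (cases "x = Suc p") (auto simp: subset_iff)
          qed
          have "\<exists>h A B. good m t W' h A B"
            using less.hyps[OF lt _ W'] less.prems(1) by simp
          then obtain h A B where g: "good m t W' h A B" by blast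
          have gp: "good m t {p} ([:-t p, 1:]^2) {p} {p}"
            by (rule good_sq[OF sm]) (use plm less.prems(1) in auto)
          have "A \<subseteq> W'" "B \<subseteq> W'" using g unfolding good_def by auto
          then have c1: "\<forall>x\<in>{p}. \<forall>y\<in>A. x + 2 \<le> y" "\<forall>x\<in>{p}. \<forall>y\<in>B. x + 2 \<le> y"
            "{p} \<inter> W' = {}"
            using W' unfolding W'_def by auto
          have "good m t ({p} \<union> W') (([:-t p, 1:]^2) * h) ({p} \<union> A) ({p} \<union> B)"
            by (rule good_mult[OF gp g c1(3) c1(1) c1(2)])
          moreover have "{p} \<union> W' = W" using pW unfolding W'_def by auto
          ultimately show ?thesis by metis
        qed
      qed
    qed
  qed
qed


lemma good_Blk: "1 \<le> L \<Longrightarrow> L < m \<Longrightarrow> \<exists>h A B. good m t {1..L} h A B \<and> A \<inter> B = {}"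
proof (induction L rule: less_induct)
  case (less L)
  show ?case
  proof (cases "L \<le> 2")
    case True
    then consider "L = 1" | "L = 2" using less.prems by linarith
    then show ?thesis
    proof cases
      case 1
      have "good m t {1..L} [:-t 1, 1:] {1} {}" using good_lin1[OF sm] less.prems 1 by simp
      then show ?thesis by blast
    next
      case 2
      have "good m t {1, Suc 1} ([:-t 1, 1:] * [:-t (Suc 1), 1:]) {1} {2}"
        by (rule good_pair[OF sm]) (use less.prems 2 in \<open>auto simp: sparse_def\<close>)
      moreover have "{1..L} = {1, Suc 1}" using 2 by auto
      moreover have "{1::nat} \<inter> {2} = {}" by simp
      ultimately show ?thesis by metis
    qed
  next
    case False
    define i where "i = L - 1"
    have Li: "L = Suc i" "2 \<le> i" using False unfolding i_def by auto
    have "\<exists>h A B. good m t {1..L-2} h A B \<and> A \<inter> B = {}"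
      by (rule less.IH) (use False less.prems in auto)
    then obtain h A B where g: "good m t {1..L-2} h A B" and d: "A \<inter> B = {}"
      by blast
    have AB: "A \<subseteq> {1..L-2}" "B \<subseteq> {1..L-2}" using g unfolding good_def by auto
    have split: "{1..L} = {1..L-2} \<union> {i, Suc i}" using Li by auto
    have disj: "{1..L-2} \<inter> {i, Suc i} = {}" using Li by auto
    show ?thesis
    proof (cases "L - 2 \<in> A")
      case True
      have gp: "good m t {i, Suc i} ([:-t i, 1:] * [:-t (Suc i), 1:]) {Suc i} {i}"
        by (rule good_pair[OF sm]) (use less.prems Li in \<open>auto simp: sparse_def\<close>)
      have "\<forall>x\<in>B. x + 2 \<le> i"
      proof
        fix x assume x: "x \<in> B"
        then have "x \<noteq> L - 2" using d True by blast
        moreover have "x \<le> L - 2" using AB x by auto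
        ultimately show "x + 2 \<le> i" using Li by linarith
      qed
      then have "good m t ({1..L-2} \<union> {i, Suc i}) (h * ([:-t i, 1:] * [:-t (Suc i), 1:])) (A \<union> {Suc i}) (B \<union> {i})"
        using good_mult[OF g gp disj] AB Li by force
      moreover have "(A \<union> {Suc i}) \<inter> (B \<union> {i}) = {}" using AB d Li True by fastforce
      ultimately show ?thesis using split by metis
    next
      case False
      have gp: "good m t {i, Suc i} ([:-t i, 1:] * [:-t (Suc i), 1:]) {i} {Suc i}"
        by (rule good_pair[OF sm]) (use less.prems Li in \<open>auto simp: sparse_def\<close>)
      have "\<forall>x\<in>A. x + 2 \<le> i"
      proof
        fix x assume x: "x \<in> A"
        then have "x \<noteq> L - 2" using False by blast
        moreover have "x \<le> L - 2" using AB x by auto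
        ultimately show "x + 2 \<le> i" using Li by linarith
      qed
      then have "good m t ({1..L-2} \<union> {i, Suc i}) (h * ([:-t i, 1:] * [:-t (Suc i), 1:])) (A \<union> {i}) (B \<union> {Suc i})"
        using good_mult[OF g gp disj] AB Li by force
      moreover have "(A \<union> {i}) \<inter> (B \<union> {Suc i}) = {}" using AB d Li False by fastforce
      ultimately show ?thesis using split by metis
    qed
  qed
qed

lemma good_main:
  assumes "1 < m" "W \<subseteq> {1..m}" "W \<noteq> {1..m}"
  shows "\<exists>h A B. good m t W h A B"
proof (cases "1 \<in> W")
  case False
  then have "W \<subseteq> {2..m}" using assms(2)
    by (metis Suc_1 Suc_leI atLeastAtMost_iff le_neq_implies_less subset_iff)
  then show ?thesis using good_Q[of 2 W] by simp
next
  case True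
  define u where "u = Min ({1..m} - W)"
  have ne: "{1..m} - W \<noteq> {}" using assms by auto
  have u: "u \<in> {1..m} - W" unfolding u_def using ne by (intro Min_in) auto
  have umin: "\<And>j. j \<in> {1..m} - W \<Longrightarrow> u \<le> j" unfolding u_def by simp
  have "u \<noteq> 1" using u True by auto
  then have u2: "2 \<le> u" using u by auto
  define L where "L = u - 1"
  have L: "1 \<le> L" "L < m" using u u2 unfolding L_def by auto
  have blkW: "{1..L} \<subseteq> W"
  proof
    fix j assume j: "j \<in> {1..L}"
    show "j \<in> W"
    proof (rule ccontr)
      assume "j \<notin> W"
      then have "u \<le> j" using umin j L by auto
      then show False using j u2 unfolding L_def by auto
    qed
  qed
  obtain hb Ab Bb where gb: "good m t {1..L} hb Ab Bb" using good_Blk L by blast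
  define W' where "W' = W - {1..L}"
  have W': "W' \<subseteq> {L+2..m}"
  proof
    fix j assume j: "j \<in> W'"
    then have "j \<noteq> u" "L < j" "j \<le> m" using u assms(2) unfolding W'_def by auto
    then show "j \<in> {L+2..m}" unfolding L_def using u2 by auto
  qed
  obtain hq Aq Bq where gq: "good m t W' hq Aq Bq" using good_Q[of "L+2" W'] W' by auto
  have "Aq \<subseteq> W'" "Bq \<subseteq> W'" "Ab \<subseteq> {1..L}" "Bb \<subseteq> {1..L}"
    using gq gb unfolding good_def by auto
  then have "good m t ({1..L} \<union> W') (hb * hq) (Ab \<union> Aq) (Bb \<union> Bq)"
    using good_mult[OF gb gq] W' unfolding W'_def by force
  moreover have "{1..L} \<union> W' = W" using blkW unfolding W'_def by auto
  ultimately show ?thesis by auto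
qed

end



lemma poly_sum_le:
  fixes h :: "real poly"
  assumes "degree h \<le> d"
  shows "poly h s = coeff h 0 + (\<Sum>k\<in>{1..d}. coeff h k * s^k)"
proof -
  have "poly h s = poly (\<Sum>i\<le>d. monom (coeff h i) i) s"
    using poly_as_sum_of_monoms'[OF assms] by simp
  also have "\<dots> = (\<Sum>i\<le>d. coeff h i * s^i)" by (simp add: poly_sum poly_monom)
  also have "{..d} = insert 0 {1..d}" by auto
  also have "(\<Sum>i\<in>insert 0 {1..d}. coeff h i * s^i) = coeff h 0 + (\<Sum>k\<in>{1..d}. coeff h k * s^k)"
    by (subst sum.insert) auto
  finally show ?thesis .
qed

lemma inner_mc:
  fixes idx :: "'n::finite \<Rightarrow> nat" and c :: "real^'n"
  shows "c \<bullet> moment_curve idx s = (\<Sum>i\<in>UNIV. c$i * s^(idx i))"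
  by (simp add: moment_curve_def inner_vec_def)

lemma face_from_poly:
  fixes idx :: "'n::finite \<Rightarrow> nat" and h :: "real poly"
  assumes bij: "bij_betw idx UNIV {1..d}" and deg: "degree h \<le> d"
    and hp: "\<forall>j\<in>{1..m}. 0 \<le> poly h (t j) \<and> (poly h (t j) = 0 \<longleftrightarrow> j \<in> W)"
    and W: "W \<subseteq> {1..m}" "W \<noteq> {1..m}"
  shows "W \<in> cyclic_boundary_complex idx m t"
proof -
  define c :: "real^'n" where "c = (\<chi> i. - coeff h (idx i))"
  define b where "b = coeff h 0"
  have key: "c \<bullet> moment_curve idx s = b - poly h s" for s
  proof -
    have "c \<bullet> moment_curve idx s = (\<Sum>i\<in>UNIV. - coeff h (idx i) * s^(idx i))"
      by (simp add: c_def inner_mc)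
    also have "\<dots> = (\<Sum>k\<in>{1..d}. - coeff h k * s^k)"
      using sum.reindex_bij_betw[OF bij, of "\<lambda>k. - coeff h k * s^k"] by simp
    also have "\<dots> = b - poly h s" using poly_sum_le[OF deg, of s]
      by (simp add: b_def sum_negf)
    finally show ?thesis .
  qed
  define V where "V = (\<lambda>i. moment_curve idx (t i)) ` {1..m}"
  define P where "P = cyclic_polytope idx m t"
  have PV: "P = convex hull V" unfolding P_def V_def cyclic_polytope_def by simp
  have sub: "P \<subseteq> {x. c \<bullet> x \<le> b}"
    unfolding PV
  proof (rule hull_minimal)
    show "V \<subseteq> {x. c \<bullet> x \<le> b}" unfolding V_def using hp key by auto
    show "convex {x. c \<bullet> x \<le> b}" by (rule convex_halfspace_le)
  qed
  define F where "F = P \<inter> {x. c \<bullet> x = b}"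
  have face: "F face_of P" unfolding F_def PV
    by (rule face_of_Int_supporting_hyperplane_le) (use sub PV in auto)
  have inP: "\<And>j. j \<in> {1..m} \<Longrightarrow> moment_curve idx (t j) \<in> P"
    unfolding PV V_def by (rule hull_inc) auto
  have inF: "\<And>j. j \<in> {1..m} \<Longrightarrow> moment_curve idx (t j) \<in> F \<longleftrightarrow> j \<in> W"
    unfolding F_def using inP key hp by auto
  obtain j where j: "j \<in> {1..m}" "j \<notin> W" using W by blast
  have "F \<noteq> P" using inF[OF j(1)] inP[OF j(1)] j(2) by auto
  moreover have "W = {i \<in> {1..m}. moment_curve idx (t i) \<in> F}" using inF W(1) by auto
  ultimately show ?thesis using face unfolding cyclic_boundary_complex_def P_def by blast
qed




lemma sparse_seq_mono:
  fixes s :: "nat \<Rightarrow> nat"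
  assumes "\<forall>j\<in>{1..a-1}. s j + 2 \<le> s (j+1)" "1 \<le> i" "i \<le> j" "j \<le> a"
  shows "s i + 2*(j-i) \<le> s j"
  using assms(3,4)
proof (induction j)
  case 0 then show ?case by simp
next
  case (Suc j)
  show ?case
  proof (cases "i = Suc j")
    case False
    then have "i \<le> j" using Suc by simp
    then have "s i + 2*(j-i) \<le> s j" using Suc by simp
    moreover have "s j + 2 \<le> s (Suc j)" using assms(1) Suc.prems \<open>i \<le> j\<close> assms(2) by auto
    ultimately show ?thesis using \<open>i \<le> j\<close> by (simp add: Suc_diff_le)
  qed simp
qed

lemma tmono:
  assumes "strict_mono_on {1..m} t" "i \<in> {1..m}" "j \<in> {1..m}" "i < j"
  shows "t i < t j"
  using assms strict_mono_onD by blast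

lemma nonface:
  fixes idx :: "'n::finite \<Rightarrow> nat" and s :: "nat \<Rightarrow> nat"
  assumes bij: "bij_betw idx UNIV {1..d}" and sm: "strict_mono_on {1..m} t"
    and sp: "\<forall>j\<in>{1..a-1}. s j + 2 \<le> s (j+1)" and a: "2 \<le> a" "d = 2*a - 2"
    and rng: "(1 \<le> s 1 \<and> s a \<le> m - 1) \<or> (2 \<le> s 1 \<and> s a \<le> m)"
  shows "s ` {1..a} \<notin> cyclic_boundary_complex idx m t"
proof
  assume "s ` {1..a} \<in> cyclic_boundary_complex idx m t"
  then obtain F where F: "F face_of cyclic_polytope idx m t" "F \<noteq> cyclic_polytope idx m t"
    "s ` {1..a} = {i \<in> {1..m}. moment_curve idx (t i) \<in> F}"
    unfolding cyclic_boundary_complex_def by blast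
  define V where "V = (\<lambda>i. moment_curve idx (t i)) ` {1..m}"
  define P where "P = cyclic_polytope idx m t"
  have PV: "P = convex hull V" unfolding P_def V_def cyclic_polytope_def by simp
  have poly: "polyhedron P" unfolding PV V_def
    by (rule polytope_imp_polyhedron, rule polytope_convex_hull) simp
  have "F exposed_face_of P" using exposed_face_of_polyhedron[OF poly] F(1) P_def by simp
  then have ex: "F = {} \<or> F = P \<or> (\<exists>c b. c \<noteq> 0 \<and> P \<subseteq> {x. c \<bullet> x \<le> b} \<and> F = P \<inter> {x. c \<bullet> x = b})"
    unfolding exposed_face_of by blast
  have sin: "\<And>k. k \<in> {1..a} \<Longrightarrow> s k \<in> {1..m}"
  proof -
    fix k assume k: "k \<in> {1..a}"
    have "s 1 + 2*(k-1) \<le> s k" using sparse_seq_mono[OF sp, of 1 k] k by auto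
    moreover have "s k + 2*(a-k) \<le> s a" using sparse_seq_mono[OF sp, of k a] k by auto
    ultimately show "s k \<in> {1..m}" using rng by auto
  qed
  have sF: "\<And>k. k \<in> {1..a} \<Longrightarrow> moment_curve idx (t (s k)) \<in> F"
    using F(3) by blast
  have "F \<noteq> {}" using sF[of 1] a by auto
  then obtain c b where cb: "P \<subseteq> {x. c \<bullet> x \<le> b}" "F = P \<inter> {x. c \<bullet> x = b}"
    using ex F(2) P_def by blast
  define g where "g = (\<Sum>i\<in>UNIV. monom (c$i) (idx i)) - [:b:]"
  have pg: "poly g x = c \<bullet> moment_curve idx x - b" for x
    by (simp add: g_def poly_sum poly_monom inner_mc)
  have dg: "degree g \<le> d" unfolding g_def
  proof (rule degree_diff_le)
    show "degree (\<Sum>i\<in>UNIV. monom (c$i) (idx i)) \<le> d"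
    proof (rule degree_sum_le)
      fix i :: 'n
      have "idx i \<le> d" using bij unfolding bij_betw_def by auto
      then show "degree (monom (c$i) (idx i)) \<le> d" using degree_monom_le order_trans by blast
    qed simp
  qed simp
  have inP: "\<And>j. j \<in> {1..m} \<Longrightarrow> moment_curve idx (t j) \<in> P"
    unfolding PV V_def by (rule hull_inc) auto
  have gle: "\<And>j. j \<in> {1..m} \<Longrightarrow> poly g (t j) \<le> 0" using inP cb(1) pg by fastforce
  have gz: "\<And>k. k \<in> {1..a} \<Longrightarrow> poly g (t (s k)) = 0" using sF cb(2) pg by auto
  have gne: "g \<noteq> 0"
  proof
    assume "g = 0"
    then have "V \<subseteq> {x. c \<bullet> x = b}" using pg unfolding V_def by auto
    then have "P \<subseteq> {x. c \<bullet> x = b}" unfolding PV by (rule hull_minimal) (rule convex_hyperplane)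
    then have "F = P" using cb(2) by auto
    then show False using F(2) P_def by simp
  qed
  define K where "K = 2*a - 1"
  have Kd: "d < K" using a unfolding K_def by simp
  have jk: "\<And>k. k \<le> K \<Longrightarrow> k div 2 + 1 \<in> {1..a}"
  proof -
    fix k assume "k \<le> K"
    then have "k < a * 2" using a unfolding K_def by simp
    then have "k div 2 < a" by (rule less_mult_imp_div_less)
    then show "k div 2 + 1 \<in> {1..a}" by simp
  qed
  from rng show False
  proof
    assume r: "1 \<le> s 1 \<and> s a \<le> m - 1"
    define e where "e k = s (k div 2 + 1) + (if odd k then 1 else 0)" for k
    define y where "y k = t (e k)" for k
    have ein: "\<And>k. k \<le> K \<Longrightarrow> e k \<in> {1..m}"
    proof -
      fix k assume k: "k \<le> K"
      have "s (k div 2 + 1) \<le> s a"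
        using sparse_seq_mono[OF sp, of "k div 2 + 1" a] jk[OF k] by auto
      then show "e k \<in> {1..m}" using sin[OF jk[OF k]] r unfolding e_def by auto
    qed
    have "K \<le> degree g"
    proof (rule alt_roots[OF gne])
      show "\<forall>k<K. y k < y (Suc k)"
      proof (intro allI impI)
        fix k assume k: "k < K"
        have "e k < e (Suc k)"
        proof (cases "even k")
          case True then show ?thesis unfolding e_def by simp
        next
          case False
          then have "Suc k div 2 = k div 2 + 1" by presburger
          moreover have "k div 2 + 1 \<in> {1..a-1}"
          proof -
            obtain q where "k = 2*q+1" using False by (meson oddE)
            then show ?thesis using k a unfolding K_def by auto
          qed
          ultimately show ?thesis using sp False unfolding e_def by fastforce
        qed
        then show "y k < y (Suc k)" unfolding y_def using tmono[OF sm] ein k by simp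
      qed
      show "\<forall>k\<le>K. 0 \<le> (-1)^k * poly g (y k)"
      proof (intro allI impI)
        fix k assume k: "k \<le> K"
        show "0 \<le> (-1)^k * poly g (y k)"
        proof (cases "even k")
          case True then show ?thesis using gz[OF jk[OF k]] unfolding y_def e_def by simp
        next
          case False then show ?thesis using gle[OF ein[OF k]] unfolding y_def by simp
        qed
      qed
    qed
    then show False using dg Kd by simp
  next
    assume r: "2 \<le> s 1 \<and> s a \<le> m"
    define e where "e k = s (k div 2 + 1) - (if even k then 1 else 0)" for k
    define y where "y k = t (e k)" for k
    have ein: "\<And>k. k \<le> K \<Longrightarrow> e k \<in> {1..m}"
    proof -
      fix k assume k: "k \<le> K"
      have "s 1 \<le> s (k div 2 + 1)"
        using sparse_seq_mono[OF sp, of 1 "k div 2 + 1"] jk[OF k] by auto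
      then show "e k \<in> {1..m}" using sin[OF jk[OF k]] r unfolding e_def by auto
    qed
    have "K \<le> degree (-g)"
    proof (rule alt_roots)
      show "-g \<noteq> 0" using gne by simp
      show "\<forall>k<K. y k < y (Suc k)"
      proof (intro allI impI)
        fix k assume k: "k < K"
        have "e k < e (Suc k)"
        proof (cases "even k")
          case True
          have "s 1 \<le> s (k div 2 + 1)"
            using sparse_seq_mono[OF sp, of 1 "k div 2 + 1"] jk[of k] k by auto
          then have "s (k div 2 + 1) \<ge> 2" using r by simp
          then show ?thesis using True unfolding e_def by simp
        next
          case False
          then have "Suc k div 2 = k div 2 + 1" by presburger
          moreover have "k div 2 + 1 \<in> {1..a-1}"
          proof -
            obtain q where "k = 2*q+1" using False by (meson oddE)
            then show ?thesis using k a unfolding K_def by auto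
          qed
          ultimately show ?thesis using sp False unfolding e_def by fastforce
        qed
        then show "y k < y (Suc k)" unfolding y_def using tmono[OF sm] ein k by simp
      qed
      show "\<forall>k\<le>K. 0 \<le> (-1)^k * poly (-g) (y k)"
      proof (intro allI impI)
        fix k assume k: "k \<le> K"
        show "0 \<le> (-1)^k * poly (-g) (y k)"
        proof (cases "even k")
          case True then show ?thesis using gle[OF ein[OF k]] unfolding y_def by simp
        next
          case False then show ?thesis using gz[OF jk[OF k]] unfolding y_def e_def by simp
        qed
      qed
    qed
    then show False using dg Kd by simp
  qed
qed




lemma poly_ring_one: "1 \<in> poly_ring m"
  by (auto simp: poly_ring_def)

lemma poly_ring_zero: "0 \<in> poly_ring m"
  by (auto simp: poly_ring_def)

lemma poly_ring_add:
  fixes p q :: "'k::comm_ring_1 mpoly"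
  assumes "p \<in> poly_ring m" "q \<in> poly_ring m"
  shows "p + q \<in> poly_ring m"
  unfolding poly_ring_def mem_Collect_eq
proof (rule ballI)
  fix \<mu> :: "nat \<Rightarrow>\<^sub>0 nat" assume "\<mu> \<in> Poly_Mapping.keys (p + q)"
  then have "\<mu> \<in> Poly_Mapping.keys p \<or> \<mu> \<in> Poly_Mapping.keys q" using keys_add[of p q] by auto
  then show "Poly_Mapping.keys \<mu> \<subseteq> {1..m}" using assms unfolding poly_ring_def by auto
qed

lemma poly_ring_mult:
  fixes p q :: "'k::comm_ring_1 mpoly"
  assumes "p \<in> poly_ring m" "q \<in> poly_ring m"
  shows "p * q \<in> poly_ring m"
  unfolding poly_ring_def mem_Collect_eq
proof (rule ballI)
  fix \<mu> :: "nat \<Rightarrow>\<^sub>0 nat" assume "\<mu> \<in> Poly_Mapping.keys (p * q)"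
  then obtain a b where ab: "\<mu> = a + b" "a \<in> Poly_Mapping.keys p" "b \<in> Poly_Mapping.keys q" using keys_mult[of p q] by auto
  have "Poly_Mapping.keys \<mu> \<subseteq> Poly_Mapping.keys a \<union> Poly_Mapping.keys b" using ab(1) keys_add[of a b] by simp
  moreover have "Poly_Mapping.keys a \<subseteq> {1..m}" "Poly_Mapping.keys b \<subseteq> {1..m}"
    using assms ab unfolding poly_ring_def by auto
  ultimately show "Poly_Mapping.keys \<mu> \<subseteq> {1..m}" by auto
qed

lemma var_in: "i \<in> {1..m} \<Longrightarrow> (var i :: 'k::comm_ring_1 mpoly) \<in> poly_ring m"
  unfolding poly_ring_def var_def by auto

lemma prod_in:
  fixes f :: "nat \<Rightarrow> 'k::comm_ring_1 mpoly" and W :: "nat set"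
  shows "(\<And>i. i \<in> W \<Longrightarrow> f i \<in> poly_ring m) \<Longrightarrow> prod f W \<in> poly_ring m"
proof (induction W rule: infinite_finite_induct)
  case (infinite A) then show ?case using poly_ring_one by simp
next
  case empty then show ?case using poly_ring_one by simp
next
  case (insert x F) then show ?case by (simp add: poly_ring_mult)
qed

lemma sqfree_in: "W \<subseteq> {1..m} \<Longrightarrow> (sqfree_monomial W :: 'k::comm_ring_1 mpoly) \<in> poly_ring m"
  unfolding sqfree_monomial_def
proof (rule prod_in)
  fix i assume "W \<subseteq> {1..m}" "i \<in> W"
  then show "(var i :: 'k mpoly) \<in> poly_ring m" using var_in[of i m] by auto
qed

lemma ideal_gen_inI:
  "finite G \<Longrightarrow> G \<subseteq> S \<Longrightarrow> \<forall>g\<in>G. c g \<in> R \<Longrightarrow> (\<Sum>g\<in>G. c g * g) \<in> ideal_gen_in R S"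
  unfolding ideal_gen_in_def by (rule CollectI, rule exI[of _ G], rule exI[of _ c]) auto

lemma ideal_gen_inE:
  assumes "x \<in> ideal_gen_in R S"
  obtains G c where "x = (\<Sum>g\<in>G. c g * g)" "finite G" "G \<subseteq> S" "\<forall>g\<in>G. c g \<in> R"
  using assms unfolding ideal_gen_in_def by auto

lemma ideal_gen_mult:
  "x \<in> S \<Longrightarrow> r \<in> R \<Longrightarrow> r * x \<in> ideal_gen_in R S"
  unfolding ideal_gen_in_def by (rule CollectI, rule exI[of _ "{x}"], rule exI[of _ "\<lambda>_. r"]) auto

lemma ideal_gen_zero: "0 \<in> ideal_gen_in R S"
  unfolding ideal_gen_in_def by (rule CollectI, rule exI[of _ "{}"]) auto

lemma ideal_gen_add:
  assumes R0: "0 \<in> R" and Radd: "\<And>p q. p \<in> R \<Longrightarrow> q \<in> R \<Longrightarrow> p + q \<in> R"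
    and x: "x \<in> ideal_gen_in R S" and y: "y \<in> ideal_gen_in R S"
  shows "x + y \<in> ideal_gen_in R S"
proof -
  obtain G1 c1 where 1: "x = (\<Sum>g\<in>G1. c1 g * g)" "finite G1" "G1 \<subseteq> S" "\<forall>g\<in>G1. c1 g \<in> R"
    using x by (rule ideal_gen_inE)
  obtain G2 c2 where 2: "y = (\<Sum>g\<in>G2. c2 g * g)" "finite G2" "G2 \<subseteq> S" "\<forall>g\<in>G2. c2 g \<in> R"
    using y by (rule ideal_gen_inE)
  define c where "c g = (if g \<in> G1 then c1 g else 0) + (if g \<in> G2 then c2 g else 0)" for g
  have fin: "finite (G1 \<union> G2)" using 1 2 by simp
  have e1: "(\<Sum>g\<in>G1 \<union> G2. (if g \<in> G1 then c1 g else 0) * g) = x"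
  proof -
    have "(\<Sum>g\<in>G1 \<union> G2. (if g \<in> G1 then c1 g else 0) * g) = (\<Sum>g\<in>G1 \<union> G2. if g \<in> G1 then c1 g * g else 0)"
      by (rule sum.cong) auto
    also have "\<dots> = (\<Sum>g\<in>(G1 \<union> G2) \<inter> G1. c1 g * g)" by (rule sum.inter_restrict[OF fin, symmetric])
    also have "(G1 \<union> G2) \<inter> G1 = G1" by auto
    finally show ?thesis using 1 by simp
  qed
  have e2: "(\<Sum>g\<in>G1 \<union> G2. (if g \<in> G2 then c2 g else 0) * g) = y"
  proof -
    have "(\<Sum>g\<in>G1 \<union> G2. (if g \<in> G2 then c2 g else 0) * g) = (\<Sum>g\<in>G1 \<union> G2. if g \<in> G2 then c2 g * g else 0)"
      by (rule sum.cong) auto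
    also have "\<dots> = (\<Sum>g\<in>(G1 \<union> G2) \<inter> G2. c2 g * g)" by (rule sum.inter_restrict[OF fin, symmetric])
    also have "(G1 \<union> G2) \<inter> G2 = G2" by auto
    finally show ?thesis using 2 by simp
  qed
  have xy: "x + y = (\<Sum>g\<in>G1 \<union> G2. c g * g)"
    unfolding c_def distrib_right sum.distrib e1 e2 ..
  have cR: "\<forall>g\<in>G1 \<union> G2. c g \<in> R"
  proof
    fix g assume "g \<in> G1 \<union> G2"
    have "(if g \<in> G1 then c1 g else 0) \<in> R" using 1(4) R0 by simp
    moreover have "(if g \<in> G2 then c2 g else 0) \<in> R" using 2(4) R0 by simp
    ultimately show "c g \<in> R" unfolding c_def by (rule Radd)
  qed
  have "G1 \<union> G2 \<subseteq> S" using 1(3) 2(3) by simp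
  then show ?thesis unfolding xy by (rule ideal_gen_inI[OF fin _ cR])
qed

lemma ideal_gen_rmult:
  assumes Rmul: "\<And>p q. p \<in> R \<Longrightarrow> q \<in> R \<Longrightarrow> p * q \<in> R"
    and r: "r \<in> R" and x: "x \<in> ideal_gen_in R S"
  shows "r * x \<in> ideal_gen_in R S"
proof -
  obtain G c where 1: "x = (\<Sum>g\<in>G. c g * g)" "finite G" "G \<subseteq> S" "\<forall>g\<in>G. c g \<in> R"
    using x by (rule ideal_gen_inE)
  have "r * x = (\<Sum>g\<in>G. (r * c g) * g)" unfolding 1 sum_distrib_left by (simp add: mult.assoc)
  moreover have "\<forall>g\<in>G. r * c g \<in> R" using 1 r Rmul by auto
  ultimately show ?thesis using 1 ideal_gen_inI[of G S "\<lambda>g. r * c g" R] by auto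
qed

lemma ideal_gen_mono:
  fixes S T :: "'k::comm_ring_1 mpoly set"
  assumes ST: "\<And>g. g \<in> S \<Longrightarrow> g \<in> ideal_gen_in (poly_ring m) T"
  shows "ideal_gen_in (poly_ring m) S \<subseteq> ideal_gen_in (poly_ring m) T"
proof
  fix x assume "x \<in> ideal_gen_in (poly_ring m) S"
  then obtain G c where 1: "x = (\<Sum>g\<in>G. c g * g)" "finite G" "G \<subseteq> S" "\<forall>g\<in>G. c g \<in> poly_ring m"
    by (rule ideal_gen_inE)
  have "(\<Sum>g\<in>G. c g * g) \<in> ideal_gen_in (poly_ring m) T"
    using 1(2,3,4)
  proof (induction G rule: finite_induct)
    case empty then show ?case using ideal_gen_zero by simp
  next
    case (insert g G)
    have i1: "c g * g \<in> ideal_gen_in (poly_ring m) T"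
      by (rule ideal_gen_rmult[where R="poly_ring m"]) (use insert ST poly_ring_mult in auto)
    have i2: "(\<Sum>g\<in>G. c g * g) \<in> ideal_gen_in (poly_ring m) T" using insert by auto
    have "c g * g + (\<Sum>g\<in>G. c g * g) \<in> ideal_gen_in (poly_ring m) T"
      by (rule ideal_gen_add[OF poly_ring_zero poly_ring_add i1 i2])
    then show ?case using insert by simp
  qed
  then show "x \<in> ideal_gen_in (poly_ring m) T" using 1 by simp
qed

lemma extract_seq:
  assumes "finite A" "sparse A" "a \<le> card A" "1 \<le> a" "A \<subseteq> {p..q}"
  shows "\<exists>s. p \<le> s 1 \<and> s a \<le> q \<and> (\<forall>j\<in>{1..a-1}. s j + 2 \<le> s (j+1)) \<and> s ` {1..a} \<subseteq> A"
proof -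
  define xs where "xs = sorted_list_of_set A"
  have len: "length xs = card A" unfolding xs_def by simp
  have set: "set xs = A" unfolding xs_def using assms(1) by simp
  have ss: "sorted_wrt (<) xs" unfolding xs_def using strict_sorted_list_of_set by blast
  define s where "s j = xs ! (j - 1)" for j
  have mem: "\<And>j. j \<in> {1..a} \<Longrightarrow> s j \<in> A"
  proof -
    fix j assume j: "j \<in> {1..a}"
    then have "j - 1 < length xs" using len assms(3) by auto
    then have "xs ! (j-1) \<in> set xs" by (rule nth_mem)
    then show "s j \<in> A" using set unfolding s_def by simp
  qed
  have step: "\<forall>j\<in>{1..a-1}. s j + 2 \<le> s (j+1)"
  proof
    fix j assume j: "j \<in> {1..a-1}"
    have "xs ! (j-1) < xs ! j" using sorted_wrt_nth_less[OF ss, of "j-1" j] j len assms(3) by auto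
    moreover have "s j \<in> A" "s (j+1) \<in> A" using mem j by auto
    ultimately show "s j + 2 \<le> s (j+1)" using assms(2) unfolding sparse_def s_def by auto
  qed
  have "s 1 \<in> {p..q}" "s a \<in> {p..q}" using mem[of 1] mem[of a] assms(4,5) by auto
  then show ?thesis using step mem by (intro exI[of _ s]) auto
qed

lemma sparse_prod_eq:
  fixes s :: "nat \<Rightarrow> nat"
  assumes "\<forall>j\<in>{1..a-1}. s j + 2 \<le> s (j+1)"
  shows "(\<Prod>j\<in>{1..a}. var (s j)) = (sqfree_monomial (s ` {1..a}) :: 'k::comm_ring_1 mpoly)"
proof -
  have "inj_on s {1..a}"
  proof (rule inj_onI)
    fix i j assume ij: "i \<in> {1..a}" "j \<in> {1..a}" "s i = s j"
    show "i = j"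
    proof (rule ccontr)
      assume "i \<noteq> j"
      then consider "i < j" | "j < i" by linarith
      then show False
      proof cases
        case 1 then show False using sparse_seq_mono[OF assms, of i j] ij by auto
      next
        case 2 then show False using sparse_seq_mono[OF assms, of j i] ij by auto
      qed
    qed
  qed
  then show ?thesis unfolding sqfree_monomial_def by (simp add: prod.reindex)
qed




theorem lemma3p1:
  fixes d m :: nat and t :: "nat \<Rightarrow> real" and idx :: "'n::finite \<Rightarrow> nat"
  assumes "even d" and "2 \<le> d" and "d < m - 1"
    and "bij_betw idx (UNIV :: 'n set) {1..d}"
    and "strict_mono_on {1..m} t"
  shows "(stanley_reisner_ideal m (cyclic_boundary_complex idx m t) :: 'k::field mpoly set)
         = ideal_gen_in (poly_ring m) (Igens ((d+2) div 2) 1 (m-1) \<union> Igens ((d+2) div 2) 2 m)"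
proof -
  note bij = assms(4) and sm = assms(5)
  obtain a where aeq: "a = (d+2) div 2" by blast
  have a2: "2 \<le> a" and da: "d = 2*a - 2" using assms(1,2) aeq by auto
  have md: "d + 2 \<le> m" using assms(3) by simp
  have m1: "1 < m" using md assms(2) by simp
  define \<Delta> where "\<Delta> = cyclic_boundary_complex idx m t"
  define S1 :: "'k mpoly set" where "S1 = {sqfree_monomial W | W. W \<subseteq> {1..m} \<and> W \<notin> \<Delta>}"
  define S2 :: "'k mpoly set" where "S2 = Igens a 1 (m-1) \<union> Igens a 2 m"
  have L: "stanley_reisner_ideal m \<Delta> = ideal_gen_in (poly_ring m) S1"
    unfolding stanley_reisner_ideal_def S1_def by simp
  have sub1: "ideal_gen_in (poly_ring m) S1 \<subseteq> ideal_gen_in (poly_ring m) S2"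
  proof (rule ideal_gen_mono)
    fix g assume "g \<in> S1"
    then obtain W where gW: "g = sqfree_monomial W" and W: "W \<subseteq> {1..m}" "W \<notin> \<Delta>"
      unfolding S1_def by blast
    have "\<exists>s. ((1 \<le> s 1 \<and> s a \<le> m-1) \<or> (2 \<le> s 1 \<and> s a \<le> m)) \<and>
              (\<forall>j\<in>{1..a-1}. s j + 2 \<le> s (j+1)) \<and> s ` {1..a} \<subseteq> W"
    proof (cases "W = {1..m}")
      case True
      define s where "s j = 2*j - 1" for j :: nat
      have "s ` {1..a} \<subseteq> W" unfolding True s_def using md da by auto
      moreover have "1 \<le> s 1 \<and> s a \<le> m-1" unfolding s_def using md da by auto
      moreover have "\<forall>j\<in>{1..a-1}. s j + 2 \<le> s (j+1)" unfolding s_def by auto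
      ultimately show ?thesis by (intro exI[of _ s]) blast
    next
      case False
      obtain h A B where g: "good m t W h A B" using good_main[OF sm m1 W(1) False] by blast
      have gA: "finite A" "sparse A" "A \<subseteq> W" "m \<notin> A" and gB: "finite B" "sparse B" "B \<subseteq> W" "1 \<notin> B"
        and gdeg: "degree h \<le> card A + card B"
        and gh: "\<forall>j\<in>{1..m}. 0 \<le> poly h (t j) \<and> (poly h (t j) = 0 \<longleftrightarrow> j \<in> W)"
        using g unfolding good_def by auto
      show ?thesis
      proof (cases "a \<le> card A")
        case True
        have "A \<subseteq> {1..m-1}"
        proof
          fix x assume "x \<in> A"
          then have "x \<in> {1..m}" "x \<noteq> m" using gA W(1) by auto
          then show "x \<in> {1..m-1}" by auto
        qed
        then obtain s where s: "1 \<le> s 1" "s a \<le> m-1" "\<forall>j\<in>{1..a-1}. s j + 2 \<le> s (j+1)" "s ` {1..a} \<subseteq> A"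
          using extract_seq[OF gA(1,2) True _, of 1 "m-1"] a2 by auto
        then show ?thesis using gA(3) by blast
      next
        case nA: False
        show ?thesis
        proof (cases "a \<le> card B")
          case True
          have "B \<subseteq> {2..m}"
          proof
            fix x assume "x \<in> B"
            then have "x \<in> {1..m}" "x \<noteq> 1" using gB W(1) by auto
            then show "x \<in> {2..m}" by auto
          qed
          then obtain s where s: "2 \<le> s 1" "s a \<le> m" "\<forall>j\<in>{1..a-1}. s j + 2 \<le> s (j+1)" "s ` {1..a} \<subseteq> B"
            using extract_seq[OF gB(1,2) True _, of 2 m] a2 by auto
          then show ?thesis using gB(3) by (intro exI[of _ s]) blast
        next
          case False
          have "degree h \<le> d" using gdeg nA False da by linarith
          then have "W \<in> \<Delta>" unfolding \<Delta>_def using face_from_poly[OF bij _ gh W(1) \<open>W \<noteq> {1..m}\<close>] by blast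
          then show ?thesis using W(2) by blast
        qed
      qed
    qed
    then obtain s where s: "(1 \<le> s 1 \<and> s a \<le> m-1) \<or> (2 \<le> s 1 \<and> s a \<le> m)"
      "\<forall>j\<in>{1..a-1}. s j + 2 \<le> s (j+1)" "s ` {1..a} \<subseteq> W" by blast
    define e :: "'k mpoly" where "e = (\<Prod>j\<in>{1..a}. var (s j))"
    have eS2: "e \<in> S2" unfolding S2_def Igens_def e_def using s(1,2) by blast
    have e_eq: "e = sqfree_monomial (s ` {1..a})" unfolding e_def by (rule sparse_prod_eq[OF s(2)])
    have finW: "finite W" using W(1) finite_subset by blast
    have "g = sqfree_monomial (W - s ` {1..a}) * e"
      unfolding gW e_eq sqfree_monomial_def using prod.subset_diff[OF s(3) finW] by simp
    moreover have "(sqfree_monomial (W - s ` {1..a}) :: 'k mpoly) \<in> poly_ring m"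
      by (rule sqfree_in) (use W(1) in auto)
    ultimately show "g \<in> ideal_gen_in (poly_ring m) S2" using ideal_gen_mult[OF eS2] by simp
  qed
  have sub2: "ideal_gen_in (poly_ring m) S2 \<subseteq> ideal_gen_in (poly_ring m) S1"
  proof (rule ideal_gen_mono)
    fix g assume "g \<in> S2"
    then obtain s where gs: "g = (\<Prod>j\<in>{1..a}. var (s j))"
      and rng: "(1 \<le> s 1 \<and> s a \<le> m-1) \<or> (2 \<le> s 1 \<and> s a \<le> m)"
      and sp: "\<forall>j\<in>{1..a-1}. s j + 2 \<le> s (j+1)"
      unfolding S2_def Igens_def by blast
    have sin: "s ` {1..a} \<subseteq> {1..m}"
    proof
      fix x assume "x \<in> s ` {1..a}"
      then obtain k where k: "k \<in> {1..a}" "x = s k" by blast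
      have "s 1 + 2*(k-1) \<le> s k" using sparse_seq_mono[OF sp, of 1 k] k by auto
      moreover have "s k + 2*(a-k) \<le> s a" using sparse_seq_mono[OF sp, of k a] k by auto
      ultimately show "x \<in> {1..m}" using rng k by auto
    qed
    have nf: "s ` {1..a} \<notin> \<Delta>" unfolding \<Delta>_def by (rule nonface[OF bij sm sp a2 da rng])
    have "g = sqfree_monomial (s ` {1..a})" unfolding gs by (rule sparse_prod_eq[OF sp])
    then have "g \<in> S1" unfolding S1_def using sin nf by blast
    then have "1 * g \<in> ideal_gen_in (poly_ring m) S1" by (rule ideal_gen_mult) (rule poly_ring_one)
    then show "g \<in> ideal_gen_in (poly_ring m) S1" by simp
  qed
  show ?thesis unfolding aeq[symmetric] L[unfolded \<Delta>_def] S2_def[symmetric] using sub1 sub2 by blast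
qed



end
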